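(* Let $n=m=2$ and let $\sigma$ be the preference profile in which each of the two alternatives is ranked first by exactly one of the two voters. If $\mathcal{D}$ is the Beta$(\frac14,1)$ distribution (density $\frac14x^{-3/4}$ on $(0,1)$), then for each alternative $j\in\{1,2\}$, $\mathbb{E}\!\left[\frac{\max_{k\in\{1,2\}}\mathrm{sw}(k,u)}{\mathrm{sw}(j,u)}\right]=\infty$; i.e., no deterministic rule has finite expected inverse distortion at $\sigma$.
   Context: Given $\mathcal{D}$ and a profile $\sigma$ (a ranking of the alternatives for each voter), a random utility profile $u$ consistent with $\sigma$ is generated as follows: independently for each voter $i$, draw $m$ i.i.d. samples from $\mathcal{D}$ and assign them, from highest to lowest, to the alternatives in the order of voter $i$'s ranking. The social welfare of $j$ is $\mathrm{sw}(j,u)=\sum_i u_{ij}$; expectation is over $u$. *)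

theory Defs
  imports "HOL-Probability.Probability"
begin

text \<open>A profile sigma maps each voter i to a list (sigma i) listing the alternatives
  from most preferred to least preferred. A sample point s assigns to each voter i
  and each sample index k < m an i.i.d. draw s (i,k) from the distribution D.\<close>

definition is_ranking :: "nat \<Rightarrow> nat list \<Rightarrow> bool" where
  "is_ranking m r \<longleftrightarrow> distinct r \<and> set r = {0..<m}"

definition is_profile :: "nat \<Rightarrow> nat \<Rightarrow> (nat \<Rightarrow> nat list) \<Rightarrow> bool" where
  "is_profile n m \<sigma> \<longleftrightarrow> (\<forall>i<n. is_ranking m (\<sigma> i))"

definition rank_pos :: "nat list \<Rightarrow> nat \<Rightarrow> nat" where
  "rank_pos r j = (LEAST p. p < length r \<and> r ! p = j)"

text \<open>Utility of voter i for alternative j: the samples of voter i, sorted from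
  highest to lowest, are assigned in the order of voter i's ranking.\<close>
definition util :: "nat \<Rightarrow> (nat \<Rightarrow> nat list) \<Rightarrow> (nat \<times> nat \<Rightarrow> real) \<Rightarrow> nat \<Rightarrow> nat \<Rightarrow> real" where
  "util m \<sigma> s i j = rev (sort (map (\<lambda>k. s (i, k)) [0..<m])) ! rank_pos (\<sigma> i) j"

definition sw :: "nat \<Rightarrow> nat \<Rightarrow> (nat \<Rightarrow> nat list) \<Rightarrow> (nat \<times> nat \<Rightarrow> real) \<Rightarrow> nat \<Rightarrow> real" where
  "sw n m \<sigma> s j = (\<Sum>i<n. util m \<sigma> s i j)"

definition sample_space :: "nat \<Rightarrow> nat \<Rightarrow> real measure \<Rightarrow> (nat \<times> nat \<Rightarrow> real) measure" where
  "sample_space n m D = PiM ({0..<n} \<times> {0..<m}) (\<lambda>_. D)"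

definition exp_inv_distortion :: "nat \<Rightarrow> nat \<Rightarrow> real measure \<Rightarrow> (nat \<Rightarrow> nat list) \<Rightarrow> nat \<Rightarrow> ennreal" where
  "exp_inv_distortion n m D \<sigma> j =
     (\<integral>\<^sup>+ s. ennreal (Max ((\<lambda>k. sw n m \<sigma> s k) ` {0..<m}) / sw n m \<sigma> s j) \<partial>sample_space n m D)"

definition beta_quarter :: "real measure" where
  "beta_quarter = density lborel (\<lambda>x. ennreal (indicator {0<..<1} x * (1/4) * x powr (-3/4)))"

end

theory Submission
  imports Defs
begin

lemma sf_bq: "sigma_finite_measure beta_quarter"
  unfolding beta_quarter_def
  by (subst sigma_finite_measure.sigma_finite_iff_density_finite[OF sigma_finite_lborel]) auto

lemma bq_sets[simp]: "sets beta_quarter = sets borel"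
  unfolding beta_quarter_def by simp

lemma dpow: assumes N: "N \<ge> (1::nat)" shows "(1/real N^4) powr (-3/4) = real N^3"
proof -
  have n4: "real N ^ 4 = real N powr 4" by simp
  have n3: "real N powr 3 = real N ^ 3" by simp
  have "(1/real N^4) powr (-3/4) = 1 / ((1/real N^4) powr (3/4))"
    using powr_minus_divide[of "1/real N^4" "3/4"] by simp
  also have "(1/real N^4) powr (3/4) = 1 / (real N^4) powr (3/4)"
    by (simp add: powr_divide)
  also have "(real N^4) powr (3/4) = real N powr 3"
    unfolding n4 powr_powr by simp
  finally show ?thesis using n3 by simp
qed

lemma bq_small:
  assumes N: "N \<ge> (1::nat)"
  shows "emeasure beta_quarter {0<..<1/real N^4} \<ge> ennreal (1/(4*real N))"
proof -
  define d where "d = 1/real N^4"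
  have d0: "0 < d" and d1: "d \<le> 1" using N by (auto simp: d_def)
  have pt: "ennreal (real N^3/4) * indicator {0<..<d} x \<le> ennreal (indicator {0<..<1} x * (1/4) * x powr (-3/4)) * indicator {0<..<d} x" for x :: real
  proof (cases "x \<in> {0<..<d}")
    case True
    then have x: "0 < x" "x < d" "x < 1" using d1 by auto
    have "d powr (-3/4) \<le> x powr (-3/4)" using x by (intro powr_mono2') auto
    moreover have "d powr (-3/4) = real N^3" unfolding d_def using N by (rule dpow)
    ultimately have "real N^3/4 \<le> indicator {0<..<1} x * (1/4) * x powr (-3/4)"
      using x by simp
    then show ?thesis using True by (simp add: ennreal_leI)
  qed simp
  have e: "ennreal (real N^3/4) * ennreal d = ennreal (real N^3/4 * d)"
    using d0 by (rule ennreal_mult''[symmetric, OF less_imp_le])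
  have r: "real N^3/4 * d = 1/(4*real N)"
    using N by (simp add: d_def power4_eq_xxxx power3_eq_cube field_simps)
  have "ennreal (1/(4*real N)) = ennreal (real N^3/4) * ennreal d"
    using e r by simp
  also have "\<dots> = (\<integral>\<^sup>+ x. ennreal (real N^3/4) * indicator {0<..<d} x \<partial>lborel)"
    using d0 by (subst nn_integral_cmult_indicator) auto
  also have "\<dots> \<le> (\<integral>\<^sup>+ x. ennreal (indicator {0<..<1} x * (1/4) * x powr (-3/4)) * indicator {0<..<d} x \<partial>lborel)"
    by (intro nn_integral_mono pt)
  also have "\<dots> = emeasure beta_quarter {0<..<d}"
    unfolding beta_quarter_def by (subst emeasure_density) auto
  finally show ?thesis by (simp add: d_def)
qed

lemma bq_big: "emeasure beta_quarter {1/2<..<1} \<ge> ennreal (1/8)"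
proof -
  have pt: "ennreal (1/4) * indicator {1/2<..<1} x \<le> ennreal (indicator {0<..<1} x * (1/4) * x powr (-3/4)) * indicator {1/2<..<1} x" for x :: real
  proof (cases "x \<in> {1/2<..<1}")
    case True
    then have x: "0 < x" "x < 1" by auto
    have "1 powr (-3/4) \<le> x powr (-3/4)" using x by (intro powr_mono2') auto
    then have "1/4 \<le> indicator {0<..<1} x * (1/4) * x powr (-3/4)" using x by simp
    then show ?thesis using True by (simp add: ennreal_leI)
  qed simp
  have e: "ennreal (1/4) * ennreal (1 - 1/2) = ennreal (1/8)"
  proof -
    have "ennreal (1/4) * ennreal (1 - 1/2) = ennreal (1/4 * (1 - 1/2))"
      by (rule ennreal_mult''[symmetric]) simp
    also have "(1/4 * (1 - 1/2) :: real) = 1/8" by simp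
    finally show ?thesis .
  qed
  have "ennreal (1/8) = ennreal (1/4) * ennreal (1 - 1/2)" using e by simp
  also have "\<dots> = (\<integral>\<^sup>+ x. ennreal (1/4) * indicator {1/2<..<1::real} x \<partial>lborel)"
    by (subst nn_integral_cmult_indicator) auto
  also have "\<dots> \<le> (\<integral>\<^sup>+ x. ennreal (indicator {0<..<1} x * (1/4) * x powr (-3/4)) * indicator {1/2<..<1} x \<partial>lborel)"
    by (intro nn_integral_mono pt)
  also have "\<dots> = emeasure beta_quarter {1/2<..<1}"
    unfolding beta_quarter_def by (subst emeasure_density) auto
  finally show ?thesis .
qed

lemma rs2: "rev (sort [x::real, y]) = [max x y, min x y]"
  by (cases "x \<le> y") auto

lemma rank_pos_fst: "rank_pos [a,b] a = 0"
  unfolding rank_pos_def by (rule Least_eq_0) simp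

lemma rank_pos_snd: "a \<noteq> b \<Longrightarrow> rank_pos [a,b] b = 1"
  unfolding rank_pos_def
proof (rule Least_equality)
  fix y assume "a \<noteq> b" "y < length [a, b] \<and> [a, b] ! y = b"
  then show "1 \<le> y" by (cases y) auto
qed simp

lemma upt2: "[0..<2] = [0, 1::nat]" by (simp add: eval_nat_numeral)

lemma util_fst: "\<sigma> i = [a,b] \<Longrightarrow> util 2 \<sigma> s i a = max (s (i,0)) (s (i,1))"
  unfolding util_def by (simp add: rank_pos_fst rank_pos_snd rs2 upt2)

lemma util_snd: "\<sigma> i = [a,b] \<Longrightarrow> a \<noteq> b \<Longrightarrow> util 2 \<sigma> s i b = min (s (i,0)) (s (i,1))"
  unfolding util_def by (simp add: rank_pos_fst rank_pos_snd rs2 upt2)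

lemma sw2: "p < 2 \<Longrightarrow> sw 2 2 \<sigma> s k = util 2 \<sigma> s p k + util 2 \<sigma> s (1-p) k"
  unfolding sw_def by (cases p) (auto simp: eval_nat_numeral)

lemma ranking2: "is_ranking 2 r \<Longrightarrow> r = [0,1] \<or> r = [1,0]"
proof -
  assume "is_ranking 2 r"
  then have d: "distinct r" and st: "set r = {0..<2}" by (auto simp: is_ranking_def)
  then have "length r = 2" using distinct_card by fastforce
  then obtain x y where r: "r = [x,y]"
    by (metis (no_types, lifting) One_nat_def Suc_length_conv length_0_conv numeral_2_eq_2)
  have "x \<in> set r" "y \<in> set r" using r by auto
  then have "x < 2" "y < 2" using st by auto
  moreover have "x \<noteq> y" using d r by auto
  ultimately have "(x = 0 \<and> y = 1) \<or> (x = 1 \<and> y = 0)" by arith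
  then show ?thesis using r by (elim disjE) simp_all
qed


lemma profile2:
  assumes "is_profile 2 2 \<sigma>" "\<forall>a<2. card {i. i < 2 \<and> hd (\<sigma> i) = a} = 1" "j < (2::nat)"
  shows "\<exists>p<2. \<sigma> p = [j, 1-j] \<and> \<sigma> (1-p) = [1-j, j]"
proof -
  have r: "\<And>i. i < 2 \<Longrightarrow> \<sigma> i = [0,1] \<or> \<sigma> i = [1,0]"
    using assms(1) ranking2 unfolding is_profile_def by auto
  have "card {i. i < 2 \<and> hd (\<sigma> i) = j} = 1" using assms by auto
  then obtain x where x: "{i. i < 2 \<and> hd (\<sigma> i) = j} = {x}" by (auto simp: card_1_singleton_iff)
  then have x2: "x < 2" "hd (\<sigma> x) = j" by auto
  have "1 - x < 2" "1 - x \<noteq> x" using x2(1) by arith+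
  then have y: "hd (\<sigma> (1-x)) \<noteq> j" using x by blast
  have j01: "j = 0 \<or> j = 1" using assms(3) by auto
  have "\<sigma> x = [j, 1-j]" using r[OF x2(1)] x2(2) j01 by auto
  moreover have "\<sigma> (1-x) = [1-j, j]" using r[OF \<open>1 - x < 2\<close>] y j01 by auto
  ultimately show ?thesis using x2 by blast
qed

lemma main_bound:
  assumes p: "p < 2" and j: "j < (2::nat)" and sp: "\<sigma> p = [j, 1-j]" and sq: "\<sigma> (1-p) = [1-j, j]"
    and N: "N \<ge> (1::nat)"
  shows "exp_inv_distortion 2 2 beta_quarter \<sigma> j \<ge> ennreal (real N / 2048)"
proof -
  define q where "q = 1 - p"
  define d where "d = 1 / real N ^ 4"
  have d0: "0 < d" using N by (simp add: d_def)
  have jj: "j \<noteq> 1 - j" using j by arith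
  define I where "I = {0..<(2::nat)} \<times> {0..<(2::nat)}"
  define A where "A = (\<lambda>ik. if ik = (q, 1::nat) then {1/2<..<1::real} else {0<..<d})"
  define B where "B = Pi\<^sub>E I A"
  define F where "F = (\<lambda>s. ennreal (Max ((\<lambda>k. sw 2 2 \<sigma> s k) ` {0..<2}) / sw 2 2 \<sigma> s j))"
  interpret P: product_sigma_finite "\<lambda>_. beta_quarter"
    unfolding product_sigma_finite_def using sf_bq by simp
  have q2: "q < 2" "q \<noteq> p" "1 - q = p" using p unfolding q_def by arith+
  have Bsets: "B \<in> sets (sample_space 2 2 beta_quarter)"
    unfolding B_def sample_space_def I_def
    by (rule sets_PiM_I_finite) (auto simp: A_def)
  have pw: "ennreal (real N ^ 4 / 4) * indicator B s \<le> F s" for s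
  proof (cases "s \<in> B")
    case True
    have "(p,0) \<in> I" "(p,1) \<in> I" "(q,0) \<in> I" "(q,1) \<in> I" using p q2 by (auto simp: I_def)
    then have s: "s (p,0) \<in> {0<..<d}" "s (p,1) \<in> {0<..<d}" "s (q,0) \<in> {0<..<d}" "s (q,1) \<in> {1/2<..<1}"
      using True q2 unfolding B_def A_def by (auto simp: PiE_iff)
    have up: "util 2 \<sigma> s p j = max (s (p,0)) (s (p,1))" using sp by (rule util_fst)
    have uq: "util 2 \<sigma> s q j = min (s (q,0)) (s (q,1))" using sq[folded q_def] jj[symmetric] by (rule util_snd)
    have up': "util 2 \<sigma> s p (1-j) = min (s (p,0)) (s (p,1))" using sp jj by (rule util_snd)
    have uq': "util 2 \<sigma> s q (1-j) = max (s (q,0)) (s (q,1))" using sq[folded q_def] by (rule util_fst)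
    have swj: "sw 2 2 \<sigma> s j = util 2 \<sigma> s p j + util 2 \<sigma> s q j" unfolding q_def by (rule sw2[OF p])
    have swj': "sw 2 2 \<sigma> s (1-j) = util 2 \<sigma> s p (1-j) + util 2 \<sigma> s q (1-j)" unfolding q_def by (rule sw2[OF p])
    have a1: "0 < sw 2 2 \<sigma> s j" "sw 2 2 \<sigma> s j \<le> 2 * d"
      using s unfolding swj up uq by auto
    have a2: "sw 2 2 \<sigma> s (1-j) \<ge> 1/2"
      using s unfolding swj' up' uq' by auto
    have "sw 2 2 \<sigma> s (1-j) \<le> Max ((\<lambda>k. sw 2 2 \<sigma> s k) ` {0..<2})"
      by (rule Max_ge) auto
    then have m: "1/2 \<le> Max ((\<lambda>k. sw 2 2 \<sigma> s k) ` {0..<2})" using a2 by linarith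
    have "real N ^ 4 / 4 = (1/2) / (2 * d)" using N by (simp add: d_def)
    also have "\<dots> \<le> (1/2) / sw 2 2 \<sigma> s j"
      using a1 by (intro divide_left_mono) auto
    also have "\<dots> \<le> Max ((\<lambda>k. sw 2 2 \<sigma> s k) ` {0..<2}) / sw 2 2 \<sigma> s j"
      using a1 m by (intro divide_right_mono) auto
    finally show ?thesis using True unfolding F_def by (auto intro!: ennreal_leI)
  qed (simp add: F_def)
  have prod: "emeasure (sample_space 2 2 beta_quarter) B = (\<Prod>i\<in>I. emeasure beta_quarter (A i))"
    unfolding sample_space_def B_def I_def
    by (rule P.emeasure_PiM) (auto simp: A_def)
  have I4: "I = {(0,0),(0,1),(1,0),(1,1)}" by (auto simp: I_def)
  have prod2: "(\<Prod>i\<in>I. emeasure beta_quarter (A i)) = emeasure beta_quarter {0<..<d} ^ 3 * emeasure beta_quarter {1/2<..<1}"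
  proof (cases "p = 0")
    case True
    then have "q = 1" by (simp add: q_def)
    then show ?thesis unfolding I4 A_def by (simp add: power3_eq_cube mult_ac)
  next
    case False
    then have "q = 0" using p by (simp add: q_def)
    then show ?thesis unfolding I4 A_def by (simp add: power3_eq_cube mult_ac)
  qed
  have "ennreal (real N / 2048) = ennreal (real N ^ 4 / 4) * (ennreal (1/(4*real N)) ^ 3 * ennreal (1/8))"
    using N by (simp add: ennreal_power ennreal_mult''[symmetric] power3_eq_cube power4_eq_xxxx field_simps)
  also have "\<dots> \<le> ennreal (real N ^ 4 / 4) * (emeasure beta_quarter {0<..<d} ^ 3 * emeasure beta_quarter {1/2<..<1})"
    using bq_small[OF N] bq_big unfolding d_def
    by (intro mult_left_mono mult_mono power_mono) auto
  also have "\<dots> = ennreal (real N ^ 4 / 4) * emeasure (sample_space 2 2 beta_quarter) B"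
    by (simp only: prod prod2)
  also have "\<dots> = (\<integral>\<^sup>+ s. ennreal (real N ^ 4 / 4) * indicator B s \<partial>sample_space 2 2 beta_quarter)"
    using Bsets by (rule nn_integral_cmult_indicator[symmetric])
  also have "\<dots> \<le> (\<integral>\<^sup>+ s. F s \<partial>sample_space 2 2 beta_quarter)"
    by (intro nn_integral_mono pw)
  also have "\<dots> = exp_inv_distortion 2 2 beta_quarter \<sigma> j"
    unfolding exp_inv_distortion_def F_def by simp
  finally show ?thesis .
qed

theorem lemma2:
  fixes \<sigma> :: "nat \<Rightarrow> nat list" and j :: nat
  assumes "is_profile 2 2 \<sigma>"
    and "\<forall>a<2. card {i. i < 2 \<and> hd (\<sigma> i) = a} = 1"
    and "j < 2"
  shows "exp_inv_distortion 2 2 beta_quarter \<sigma> j = \<infinity>"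
proof (rule ccontr)
  obtain p where p: "p < 2" "\<sigma> p = [j, 1-j]" "\<sigma> (1-p) = [1-j, j]"
    using profile2[OF assms] by blast
  assume "exp_inv_distortion 2 2 beta_quarter \<sigma> j \<noteq> \<infinity>"
  then obtain r where r: "exp_inv_distortion 2 2 beta_quarter \<sigma> j = ennreal r" "0 \<le> r"
    by (cases "exp_inv_distortion 2 2 beta_quarter \<sigma> j") auto
  define N where "N = nat \<lceil>2048 * r\<rceil> + 1"
  have N1: "N \<ge> 1" by (simp add: N_def)
  have "ennreal (real N / 2048) \<le> ennreal r"
    using main_bound[OF p(1) assms(3) p(2) p(3) N1] r by simp
  then have "real N / 2048 \<le> r" using r(2) by (simp add: ennreal_le_iff)
  moreover have "real N > 2048 * r" unfolding N_def by linarith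
  ultimately show False by simp
qed

end
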